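(* Let $q=p^e$ with $p$ prime, let $a\in\mathbb{F}_q^*$, and let $f(x)=(x-a)^k\in\mathbb{F}_q[x]$ with $k\ge1$. Then every $f$-subgroup $M$ (in the multiplicative group of any extension field of $\mathbb{F}_q$) equals $\langle a\rangle$, and $M$ is standard: every $f$-sequence presenting $M$ is cyclic with $s_{n+1}=a s_n$ for all $n\in\mathbb{Z}$.
   Context: An $f$-sequence is a two-way infinite sequence $(s_n)_{n\in\mathbb{Z}}$ with $f(\sigma)s=0$, where $(\sigma s)_n=s_{n+1}$. A sequence $s$ presents a finite multiplicative subgroup $M$ if $s$ has smallest period $|M|$ and $M=\{s_0,\ldots,s_{|M|-1}\}$; $M$ is an $f$-subgroup if some $f$-sequence presents it. A sequence is cyclic if $s_{n+1}/s_n$ is a constant. An $f$-subgroup is standard if every $f$-sequence presenting it is cyclic. *)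

theory Defs
  imports "HOL-Computational_Algebra.Polynomial"
begin

text \<open>Applying the polynomial f to the shift operator: (f(sigma) s)_n = sum_i f_i s_(n+i).\<close>
definition f_sequence :: "'a::comm_ring_1 poly \<Rightarrow> (int \<Rightarrow> 'a) \<Rightarrow> bool" where
  "f_sequence f s \<longleftrightarrow> (\<forall>n::int. (\<Sum>i\<le>degree f. coeff f i * s (n + int i)) = 0)"

definition finite_mult_subgroup :: "'a::field set \<Rightarrow> bool" where
  "finite_mult_subgroup M \<longleftrightarrow> finite M \<and> 0 \<notin> M \<and> 1 \<in> M \<and>
     (\<forall>x\<in>M. \<forall>y\<in>M. x * y \<in> M) \<and> (\<forall>x\<in>M. inverse x \<in> M)"

definition has_period :: "(int \<Rightarrow> 'a) \<Rightarrow> nat \<Rightarrow> bool" where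
  "has_period s d \<longleftrightarrow> (\<forall>n::int. s (n + int d) = s n)"

definition smallest_period :: "(int \<Rightarrow> 'a) \<Rightarrow> nat \<Rightarrow> bool" where
  "smallest_period s d \<longleftrightarrow> 0 < d \<and> has_period s d \<and> (\<forall>d'. 0 < d' \<and> d' < d \<longrightarrow> \<not> has_period s d')"

definition presents :: "(int \<Rightarrow> 'a::field) \<Rightarrow> 'a set \<Rightarrow> bool" where
  "presents s M \<longleftrightarrow> finite_mult_subgroup M \<and> smallest_period s (card M) \<and>
     M = s ` {0..<int (card M)}"

definition f_subgroup :: "'a::field poly \<Rightarrow> 'a set \<Rightarrow> bool" where
  "f_subgroup f M \<longleftrightarrow> (\<exists>s. f_sequence f s \<and> presents s M)"

definition cyclic_seq :: "(int \<Rightarrow> 'a::field) \<Rightarrow> bool" where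
  "cyclic_seq s \<longleftrightarrow> (\<exists>c. \<forall>n::int. s (n + 1) = c * s n)"

definition standard_f_subgroup :: "'a::field poly \<Rightarrow> 'a set \<Rightarrow> bool" where
  "standard_f_subgroup f M \<longleftrightarrow> f_subgroup f M \<and>
     (\<forall>s. f_sequence f s \<and> presents s M \<longrightarrow> cyclic_seq s)"

definition is_subfield :: "'a::field set \<Rightarrow> bool" where
  "is_subfield F \<longleftrightarrow> 0 \<in> F \<and> 1 \<in> F \<and> (\<forall>x\<in>F. \<forall>y\<in>F. x + y \<in> F \<and> x * y \<in> F) \<and>
     (\<forall>x\<in>F. - x \<in> F \<and> inverse x \<in> F)"

end

theory Submission
  imports Defs "HOL-Computational_Algebra.Computational_Algebra"
begin

definition ap :: "'a::comm_ring_1 poly \<Rightarrow> (int \<Rightarrow> 'a) \<Rightarrow> int \<Rightarrow> 'a" where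
  "ap g s n = (\<Sum>i\<le>degree g. coeff g i * s (n + int i))"

definition Dop :: "'a::comm_ring_1 \<Rightarrow> (int \<Rightarrow> 'a) \<Rightarrow> int \<Rightarrow> 'a" where
  "Dop a s = (\<lambda>n. s (n + 1) - a * s n)"

lemma ap_bound:
  assumes "degree g \<le> m"
  shows "ap g s n = (\<Sum>i\<le>m. coeff g i * s (n + int i))"
  unfolding ap_def
proof (rule sum.mono_neutral_left)
  show "\<forall>i\<in>{..m} - {..degree g}. coeff g i * s (n + int i) = 0"
    by (auto simp: coeff_eq_0)
qed (use assms in auto)

lemma ap_add: "ap (g + h) s n = ap g s n + ap h s n"
proof -
  define m where "m = max (degree g) (degree h)"
  have "degree (g + h) \<le> m" unfolding m_def by (rule degree_add_le) auto
  hence "ap (g + h) s n = (\<Sum>i\<le>m. coeff (g+h) i * s (n + int i))" by (rule ap_bound)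
  also have "\<dots> = (\<Sum>i\<le>m. coeff g i * s (n + int i)) + (\<Sum>i\<le>m. coeff h i * s (n + int i))"
    by (simp add: distrib_right sum.distrib)
  also have "\<dots> = ap g s n + ap h s n"
    by (subst (1 2) ap_bound[where m=m]) (auto simp: m_def)
  finally show ?thesis .
qed

lemma ap_smult: "ap (smult c g) s n = c * ap g s n"
proof -
  have "ap (smult c g) s n = (\<Sum>i\<le>degree g. coeff (smult c g) i * s (n + int i))"
    by (rule ap_bound) (rule degree_smult_le)
  thus ?thesis by (simp add: ap_def sum_distrib_left mult.assoc)
qed

lemma ap_pCons0: "ap (pCons 0 g) s n = ap g s (n + 1)"
proof -
  have "ap (pCons 0 g) s n = (\<Sum>i\<le>Suc (degree g). coeff (pCons 0 g) i * s (n + int i))"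
    by (rule ap_bound) (rule degree_pCons_le)
  also have "\<dots> = (\<Sum>i\<le>degree g. coeff g i * s (n + 1 + int i))"
    by (subst sum.atMost_Suc_shift) (simp add: ac_simps)
  finally show ?thesis by (simp add: ap_def)
qed

lemma ap_step: "ap ([:-a, 1:] * g) s n = ap g s (n + 1) - a * ap g s n"
proof -
  have "[:-a, 1:] * g = smult (-a) g + pCons 0 g"
    by (simp add: mult_pCons_left)
  hence "ap ([:-a, 1:] * g) s n = ap (smult (-a) g) s n + ap (pCons 0 g) s n"
    by (simp only: ap_add)
  thus ?thesis by (simp only: ap_smult ap_pCons0) simp
qed

lemma ap_D: "ap g (Dop a s) n = ap g s (n + 1) - a * ap g s n"
  unfolding ap_def Dop_def
  by (simp add: sum_subtractf sum_distrib_left right_diff_distrib ac_simps)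

lemma ap_one: "ap 1 s n = s n"
  by (simp add: ap_def)

lemma ap_pow: "ap ([:-a, 1:] ^ k) s n = (Dop a ^^ k) s n"
proof (induction k arbitrary: s n)
  case 0
  then show ?case by (simp add: ap_one)
next
  case (Suc k)
  have "ap ([:-a, 1:] ^ Suc k) s n = ap ([:-a, 1:] ^ k) s (n + 1) - a * ap ([:-a, 1:] ^ k) s n"
    by (simp only: power_Suc ap_step)
  also have "\<dots> = ap ([:-a, 1:] ^ k) (Dop a s) n" by (simp add: ap_D)
  also have "\<dots> = (Dop a ^^ k) (Dop a s) n" by (rule Suc.IH)
  finally show ?case by (simp only: funpow_Suc_right comp_apply)
qed

lemma key:
  fixes t :: "int \<Rightarrow> 'a::field"
  assumes per: "has_period t N" and N: "of_nat N \<noteq> (0::'a)"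
    and z: "\<And>n. Dop a (Dop a t) n = 0"
  shows "Dop a t n = 0"
proof -
  define r where "r = Dop a t"
  have hr: "r (m + 1) = a * r m" for m using z[of m] unfolding r_def Dop_def by (simp add: algebra_simps)
  have ht: "t (m + 1) = a * t m + r m" for m by (simp add: r_def Dop_def)
  have c1: "r (n + int m) = a ^ m * r n" for m
  proof (induction m)
    case (Suc m)
    have "r (n + int (Suc m)) = r ((n + int m) + 1)" by (simp add: ac_simps)
    also have "\<dots> = a * r (n + int m)" by (rule hr)
    finally show ?case using Suc by simp
  qed simp
  have c2: "t (n + int m) * a = a ^ Suc m * t n + of_nat m * a ^ m * r n" for m
  proof (induction m)
    case (Suc m)
    have "t (n + int (Suc m)) = t ((n + int m) + 1)" by (simp add: ac_simps)
    also have "\<dots> = a * t (n + int m) + r (n + int m)" by (rule ht)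
    finally have "t (n + int (Suc m)) * a = a * (t (n + int m) * a) + a * a ^ m * r n"
      using c1[of m] by (simp add: algebra_simps)
    also have "\<dots> = a ^ Suc (Suc m) * t n + of_nat (Suc m) * a ^ (Suc m) * r n"
      using Suc by (simp add: algebra_simps)
    finally show ?case .
  qed simp
  have rp: "r (n + int N) = r n"
    unfolding r_def Dop_def using per unfolding has_period_def
    by (metis add.commute add.left_commute)
  have tp: "t (n + int N) = t n" using per unfolding has_period_def by simp
  have e1: "a ^ N * r n = r n" using c1[of N] rp by simp
  have e2: "t n * a = a ^ Suc N * t n + of_nat N * (a ^ N * r n)"
    using c2[of N] tp by (simp add: mult.assoc)
  show ?thesis
  proof (rule ccontr)
    assume "Dop a t n \<noteq> 0"
    hence rn: "r n \<noteq> 0" by (simp add: r_def)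
    hence aN: "a ^ N = 1" using e1 by (metis mult_cancel_right1)
    hence "of_nat N * r n = 0" using e2 e1 by (simp add: mult.commute)
    thus False using rn N by simp
  qed
qed

lemma iter:
  fixes t :: "int \<Rightarrow> 'a::field"
  assumes N: "of_nat N \<noteq> (0::'a)"
  shows "has_period t N \<Longrightarrow> (\<And>n. (Dop a ^^ Suc j) t n = 0) \<Longrightarrow> Dop a t n = 0"
proof (induction j arbitrary: t n)
  case 0
  then show ?case by simp
next
  case (Suc j)
  have per: "has_period (Dop a t) N"
    using Suc.prems(1) unfolding has_period_def Dop_def by (metis add.commute add.left_commute)
  have "Dop a (Dop a t) m = 0" for m
    by (rule Suc.IH[OF per]) (use Suc.prems(2) in \<open>simp add: funpow_Suc_right del: funpow.simps\<close>)
  then show ?case by (rule key[OF Suc.prems(1) N])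
qed

lemma lagrange:
  fixes M :: "'a::field set"
  assumes "finite_mult_subgroup M" and x: "x \<in> M"
  shows "x ^ card M = 1"
proof -
  have fin: "finite M" and z: "0 \<notin> M" and cl: "\<forall>x\<in>M. \<forall>y\<in>M. x * y \<in> M"
    and inv: "\<forall>x\<in>M. inverse x \<in> M"
    using assms(1) unfolding finite_mult_subgroup_def by auto
  have x0: "x \<noteq> 0" using x z by auto
  have bij: "bij_betw (\<lambda>y. x * y) M M"
  proof (rule bij_betwI')
    show "x * y = x * z \<longleftrightarrow> y = z" for y z using x0 by simp
    show "x * y \<in> M" if "y \<in> M" for y using cl x that by auto
    show "\<exists>y\<in>M. z = x * y" if "z \<in> M" for z
      by (rule bexI[of _ "inverse x * z"]) (use x0 cl inv x that in auto)
  qed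
  have "(\<Prod>y\<in>M. x * y) = (\<Prod>y\<in>M. y)"
    using prod.reindex_bij_betw[OF bij, of "\<lambda>y. y"] by simp
  hence "x ^ card M * (\<Prod>y\<in>M. y) = (\<Prod>y\<in>M. y)"
    by (simp add: prod.distrib)
  moreover have "(\<Prod>y\<in>M. y) \<noteq> 0" using fin z by (auto simp: prod_zero_iff)
  ultimately show ?thesis by simp
qed

lemma frob:
  fixes x y :: "'a::comm_ring_1"
  assumes p: "prime p" and c: "of_nat p = (0::'a)"
  shows "(x + y) ^ p = x ^ p + y ^ p"
proof -
  have p0: "p \<noteq> 0" using p by auto
  have "(x + y) ^ p = (\<Sum>k\<le>p. of_nat (p choose k) * x ^ k * y ^ (p - k))"
    by (rule binomial_ring)
  also have "\<dots> = (\<Sum>k\<in>{0,p}. of_nat (p choose k) * x ^ k * y ^ (p - k))"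
  proof (rule sum.mono_neutral_right)
    show "\<forall>i\<in>{..p} - {0, p}. of_nat (p choose i) * x ^ i * y ^ (p - i) = 0"
    proof
      fix i assume i: "i \<in> {..p} - {0, p}"
      have "p dvd (p choose i)" using i p0 p by (intro dvd_choose_prime) auto
      then obtain c' where "p choose i = p * c'" by (auto elim: dvdE)
      hence "of_nat (p choose i) = (0::'a)" using c by simp
      thus "of_nat (p choose i) * x ^ i * y ^ (p - i) = 0" by simp
    qed
  qed auto
  also have "\<dots> = x ^ p + y ^ p" using p0 by simp
  finally show ?thesis .
qed

lemma charlemma:
  fixes M :: "'a::field set"
  assumes G: "finite_mult_subgroup M"
  shows "of_nat (card M) \<noteq> (0::'a)"
proof
  assume N0: "of_nat (card M) = (0::'a)"
  define N where "N = card M"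
  have fin: "finite M" and one: "1 \<in> M" using G unfolding finite_mult_subgroup_def by auto
  have Npos: "N > 0" unfolding N_def using fin one by (auto simp: card_gt_0_iff)
  have "CHAR('a) > 0" using N0 Npos CHAR_pos_iff unfolding N_def by blast
  hence pr: "prime CHAR('a)" by (rule prime_CHAR_semidom)
  define p where "p = CHAR('a)"
  have pp: "prime p" using pr p_def by simp
  have "p dvd N" using N0 unfolding p_def N_def by (simp add: of_nat_eq_0_iff_char_dvd)
  then obtain N1 where N1: "N = p * N1" by (auto elim: dvdE)
  have p2: "p \<ge> 2" using pp prime_ge_2_nat by blast
  have N1pos: "N1 > 0" using Npos N1 by (cases N1) auto
  have N1lt: "N1 < N" using N1 p2 N1pos by simp
  have cp: "of_nat p = (0::'a)" unfolding p_def by simp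
  have roots: "x ^ N1 = 1" if x: "x \<in> M" for x
  proof -
    define y where "y = x ^ N1"
    have "y ^ p = 1" using lagrange[OF G x] unfolding y_def N_def[symmetric] N1
      by (simp add: power_mult[symmetric] mult.commute)
    have "(y + (-1)) ^ p = y ^ p + (-1) ^ p" by (rule frob[OF pp cp])
    also have "(-1::'a) ^ p = - (1 ^ p)" by (rule minus_power_prime_CHAR) (simp_all add: p_def pr)
    finally have "(y - 1) ^ p = 0" using \<open>y ^ p = 1\<close> by simp
    hence "y - 1 = 0" by simp
    thus ?thesis unfolding y_def by simp
  qed
  define P where "P = monom (1::'a) N1 - 1"
  have Pev: "poly P x = x ^ N1 - 1" for x unfolding P_def by (simp add: poly_monom)
  have P0: "P \<noteq> 0"
  proof
    assume "P = 0"
    hence "poly P 0 = 0" by simp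
    thus False using Pev[of 0] N1pos by (simp add: zero_power)
  qed
  have sub: "M \<subseteq> {x. poly P x = 0}" using roots by (auto simp: Pev)
  have "card M \<le> card {x. poly P x = 0}"
    by (rule card_mono[OF poly_roots_finite[OF P0] sub])
  also have "\<dots> \<le> degree P" by (rule card_poly_roots_bound[OF P0])
  also have "\<dots> \<le> N1" unfolding P_def
    by (rule degree_diff_le) (auto intro: degree_monom_le)
  finally show False using N1lt unfolding N_def by simp
qed

lemma seq_rec:
  fixes a :: "'a::field"
  assumes fs: "f_sequence ([:- a, 1:] ^ k) s" and pr: "presents s M" and k: "k \<ge> 1"
  shows "s (n + 1) = a * s n"
proof -
  have G: "finite_mult_subgroup M" and sp: "smallest_period s (card M)"
    using pr unfolding presents_def by auto
  have per: "has_period s (card M)" using sp unfolding smallest_period_def by auto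
  have N: "of_nat (card M) \<noteq> (0::'a)" by (rule charlemma[OF G])
  obtain j where kj: "k = Suc j" using k by (cases k) auto
  have "(Dop a ^^ Suc j) s m = 0" for m
    using fs unfolding f_sequence_def kj ap_pow[symmetric] ap_def by blast
  hence "Dop a s n = 0" by (intro iter[OF N per]) 
  thus ?thesis by (simp add: Dop_def)
qed

lemma powi_form:
  fixes a :: "'a::field"
  assumes a: "a \<noteq> 0" and r: "\<And>n. s (n + 1) = a * s n"
  shows "s n = a powi n * s 0"
proof (induction n rule: int_induct[where k=0])
  case base
  then show ?case by simp
next
  case (step1 i)
  then show ?case using r[of i] a by (simp add: power_int_add)
next
  case (step2 i)
  have "s i = a * s (i - 1)" using r[of "i - 1"] by simp
  hence "s (i - 1) = s i / a" using a by (simp add: field_simps)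
  then show ?case using step2 a by (simp add: power_int_diff field_simps)
qed

theorem mainTheorem6:
  fixes F :: "'a::field set" and p e k :: nat and a :: 'a
  assumes "is_subfield F" and "finite F" and "prime p" and "card F = p ^ e"
    and "a \<in> F" and "a \<noteq> 0" and "k \<ge> 1"
    and "f_subgroup ([:- a, 1:] ^ k) M"
  shows "M = {a powi n | n::int. True}
     \<and> standard_f_subgroup ([:- a, 1:] ^ k) M
     \<and> (\<forall>s. f_sequence ([:- a, 1:] ^ k) s \<and> presents s M \<longrightarrow> (\<forall>n::int. s (n + 1) = a * s n))"
proof -
  have third: "\<forall>s. f_sequence ([:- a, 1:] ^ k) s \<and> presents s M \<longrightarrow> (\<forall>n::int. s (n + 1) = a * s n)"
    using seq_rec assms(7) by blast
  have std: "standard_f_subgroup ([:- a, 1:] ^ k) M"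
    unfolding standard_f_subgroup_def cyclic_seq_def using assms(8) third by blast
  obtain s where fs: "f_sequence ([:- a, 1:] ^ k) s" and pr: "presents s M"
    using assms(8) unfolding f_subgroup_def by blast
  define N where "N = card M"
  have G: "finite_mult_subgroup M" and sp: "smallest_period s N" and Mim: "M = s ` {0..<int N}"
    using pr unfolding presents_def N_def by auto
  have Npos: "N > 0" and per: "has_period s N" using sp unfolding smallest_period_def by auto
  have z: "0 \<notin> M" and one: "1 \<in> M" using G unfolding finite_mult_subgroup_def by auto
  have r: "\<And>n. s (n + 1) = a * s n" using third fs pr by blast
  have sf: "s n = a powi n * s 0" for n by (rule powi_form[where s=s, OF assms(6) r])
  have s0: "s 0 \<noteq> 0" using z Mim Npos by force
  have "s (0 + int N) = s 0" using per unfolding has_period_def by blast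
  hence aN: "a powi int N = 1" using sf[of "int N"] s0 by simp
  obtain j where j: "j \<in> {0..<int N}" "s j = 1" using one Mim by auto
  have s0j: "s 0 = a powi (- j)" using j(2) sf[of j] assms(6)
    by (simp add: power_int_minus field_simps)
  have sf2: "s n = a powi (n - j)" for n
    using sf[of n] s0j assms(6) by (simp add: power_int_add[symmetric])
  have "M = {a powi n | n::int. True}"
  proof
    show "M \<subseteq> {a powi n | n::int. True}" using Mim sf2 by auto
  next
    show "{a powi n | n::int. True} \<subseteq> M"
    proof safe
      fix m :: int
      define i where "i = (m + j) mod int N"
      have i: "i \<in> {0..<int N}" using Npos unfolding i_def by simp
      have "i - j = m + (- ((m + j) div int N)) * int N"
        unfolding i_def by (simp add: minus_div_mult_eq_mod[symmetric] algebra_simps)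
      moreover have "a powi (m + q * int N) = a powi m * (a powi int N) powi q" for q
      proof -
        have "a powi (m + q * int N) = a powi m * a powi (int N * q)"
          using assms(6) by (simp add: power_int_add mult.commute)
        also have "a powi (int N * q) = (a powi int N) powi q" by (rule power_int_mult)
        finally show ?thesis .
      qed
      ultimately have "a powi (i - j) = a powi m * (a powi int N) powi (- ((m + j) div int N))"
        by (simp only:)
      hence "s i = a powi m" using aN sf2[of i] by simp
      thus "a powi m \<in> M" using Mim i by (metis image_eqI)
    qed
  qed
  with std third show ?thesis by blast
qed

end
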